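(* There is an absolute constant $C$ and a deterministic adaptive procedure with the following property. Let $G=(V,E)$ be a connected graph on $n\ge 2$ vertices with maximum degree $\Delta\ge 2$, $s\in V$, $\mathcal{T}$ the layering tree of $G$ with respect to $s$, and $\ell\ge \ell(\mathcal{T})$ an integer. Let $k\ge 0$ and $i=k+\ell+2$. Given $\ell$, the layers $L_0,L_1,\dots$, the graph $G_i$ and the tree $\mathcal{T}_k$, and access to the shortest-path distance oracle of $G$, the procedure computes $G_{i+1}$ using at most $C\cdot|L_i|\left(\Delta^{\ell+2}\log n+\Delta^{4\ell+8}\right)$ queries.
   Context: Shortest-path distance oracle: given $u,v\in V$ it returns $d_G(u,v)$; each call is one query, chosen adaptively. For a connected graph $G$ and root $s\in V(G)$, the BFS layers are $L_i=\{v: d_G(s,v)=i\}$ for $i\ge 0$, with $L_{\le k}=L_0\cup\dots\cup L_k$, $L_{\ge k}=\bigcup_{j\ge k}L_j$, $L_{-1}=\emptyset$. For each $i\ge 0$, let $S_i^1,\dots,S_i^{s_i}$ be the connected components of $G\setminus L_{\le i-1}$ (i.e. of $G[L_{\ge i}]$), and let $P_i^j=S_i^j\cap L_i$; the nonempty sets $P_i^j$ are the parts at layer (depth) $i$, and the set $\mathcal{P}$ of all parts over all layers partitions $V(G)$. The layering tree $\mathcal{T}=(\mathcal{P},\mathcal{E})$ has the parts as vertices, with $(P,P')\in\mathcal{E}$ iff some $u\in P$, $u'\in P'$ are adjacent in $G$. Its length is $\ell(\mathcal{T})=\max_{P\in\mathcal{P}}\max_{u,v\in P} d_G(u,v)$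 (distances measured in $G$). $G_i=G[L_{\le i-1}]$ is the subgraph induced by the first $i$ layers, and $\mathcal{T}_k$ is the subtree of $\mathcal{T}$ induced by the parts at layers $0,1,\dots,k-1$. *)

theory Defs
  imports Complex_Main
begin

definition simple_graph :: "nat set \<Rightarrow> nat set set \<Rightarrow> bool" where
  "simple_graph V E \<longleftrightarrow> finite V \<and> E \<subseteq> {{u, v} | u v. u \<in> V \<and> v \<in> V \<and> u \<noteq> v}"

definition adj :: "nat set set \<Rightarrow> (nat \<times> nat) set" where
  "adj E = {(u, v). {u, v} \<in> E \<and> u \<noteq> v}"

definition connected_graph :: "nat set \<Rightarrow> nat set set \<Rightarrow> bool" where
  "connected_graph V E \<longleftrightarrow> (\<forall>u\<in>V. \<forall>v\<in>V. \<exists>m. (u, v) \<in> adj E ^^ m)"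

definition dist :: "nat set set \<Rightarrow> nat \<Rightarrow> nat \<Rightarrow> nat" where
  "dist E u v = (LEAST m. (u, v) \<in> adj E ^^ m)"

definition degree :: "nat set set \<Rightarrow> nat \<Rightarrow> nat" where
  "degree E u = card {v. {u, v} \<in> E \<and> u \<noteq> v}"

definition max_degree :: "nat set \<Rightarrow> nat set set \<Rightarrow> nat" where
  "max_degree V E = Max (degree E ` V)"

definition layer :: "nat set \<Rightarrow> nat set set \<Rightarrow> nat \<Rightarrow> nat \<Rightarrow> nat set" where
  "layer V E s i = {v \<in> V. dist E s v = i}"

definition layers_ge :: "nat set \<Rightarrow> nat set set \<Rightarrow> nat \<Rightarrow> nat \<Rightarrow> nat set" where
  "layers_ge V E s i = {v \<in> V. i \<le> dist E s v}"

text \<open>L_{\<le> i-1} = first i layers (empty for i = 0).\<close>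
definition layers_lt :: "nat set \<Rightarrow> nat set set \<Rightarrow> nat \<Rightarrow> nat \<Rightarrow> nat set" where
  "layers_lt V E s i = {v \<in> V. dist E s v < i}"

definition component_in :: "nat set set \<Rightarrow> nat set \<Rightarrow> nat \<Rightarrow> nat set" where
  "component_in E W x = {y \<in> W. (x, y) \<in> (adj E \<inter> (W \<times> W))\<^sup>*}"

definition parts_at :: "nat set \<Rightarrow> nat set set \<Rightarrow> nat \<Rightarrow> nat \<Rightarrow> nat set set" where
  "parts_at V E s i =
     {component_in E (layers_ge V E s i) x \<inter> layer V E s i | x. x \<in> layer V E s i}"

definition parts :: "nat set \<Rightarrow> nat set set \<Rightarrow> nat \<Rightarrow> nat set set" where
  "parts V E s = (\<Union>i. parts_at V E s i)"

definition part_edges :: "nat set set \<Rightarrow> nat set set \<Rightarrow> nat set set set" where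
  "part_edges E Ps = {{P, P'} | P P'. P \<in> Ps \<and> P' \<in> Ps \<and> P \<noteq> P' \<and>
                        (\<exists>u\<in>P. \<exists>u'\<in>P'. {u, u'} \<in> E)}"

definition tree_length :: "nat set \<Rightarrow> nat set set \<Rightarrow> nat \<Rightarrow> nat" where
  "tree_length V E s = Max {dist E u v | u v P. P \<in> parts V E s \<and> u \<in> P \<and> v \<in> P}"

text \<open>T_k: subtree induced by the parts at layers 0..k-1 (vertex set, edge set).\<close>
definition tree_prefix :: "nat set \<Rightarrow> nat set set \<Rightarrow> nat \<Rightarrow> nat \<Rightarrow> nat set set \<times> nat set set set" where
  "tree_prefix V E s k =
     (let Ps = (\<Union>j<k. parts_at V E s j) in (Ps, part_edges E Ps))"

text \<open>G_i = G[L_{\<le> i-1}] (vertex set, edge set).\<close>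
definition graph_prefix :: "nat set \<Rightarrow> nat set set \<Rightarrow> nat \<Rightarrow> nat \<Rightarrow> nat set \<times> nat set set" where
  "graph_prefix V E s i =
     (let W = layers_lt V E s i in (W, {e \<in> E. e \<subseteq> W}))"

text \<open>A deterministic adaptive procedure with oracle queries of type 'q answered by
values of type 'a and final output 'r: either return a result, or ask a query and
continue depending on the answer.\<close>
datatype ('q, 'a, 'r) qtree = Ret 'r | Ask 'q "'a \<Rightarrow> ('q, 'a, 'r) qtree"

primrec run_result :: "('q \<Rightarrow> 'a) \<Rightarrow> ('q, 'a, 'r) qtree \<Rightarrow> 'r" where
  "run_result orc (Ret r) = r"
| "run_result orc (Ask q f) = run_result orc (f (orc q))"

primrec run_queries :: "('q \<Rightarrow> 'a) \<Rightarrow> ('q, 'a, 'r) qtree \<Rightarrow> nat" where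
  "run_queries orc (Ret r) = 0"
| "run_queries orc (Ask q f) = Suc (run_queries orc (f (orc q)))"

text \<open>Input given to the procedure: l, k, the layer function i \<mapsto> L_i, the graph G_i
 and the tree T_k.\<close>
type_synonym proc_input =
  "nat \<times> nat \<times> (nat \<Rightarrow> nat set) \<times> (nat set \<times> nat set set) \<times> (nat set set \<times> nat set set set)"

type_synonym procedure = "proc_input \<Rightarrow> (nat \<times> nat, nat, nat set \<times> nat set set) qtree"

end

theory Submission
  imports Defs
begin


lemma relpow_mono_set: "(R :: ('a \<times> 'a) set) \<subseteq> S \<Longrightarrow> R ^^ n \<subseteq> S ^^ n"
proof (induction n)
  case 0 then show ?case by simp
next
  case (Suc n) then show ?case by (simp add: relcomp_mono)
qed

locale grf =
  fixes V :: "nat set" and E :: "nat set set" and s :: nat and l :: nat and k :: nat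
  assumes sg: "simple_graph V E" and conn: "connected_graph V E" and sV: "s \<in> V"
    and D2: "2 \<le> max_degree V E" and lT: "tree_length V E s \<le> l"
begin

abbreviation "lay x \<equiv> dist E s x"
abbreviation "ii \<equiv> k + l + 2"
abbreviation "Ei \<equiv> {e \<in> E. e \<subseteq> layers_lt V E s ii}"
abbreviation "cmp j x \<equiv> component_in E (layers_ge V E s j) x"
abbreviation "D \<equiv> max_degree V E"

lemma finV: "finite V" using sg by (simp add: simple_graph_def)

lemma adj_V: "(u,v) \<in> adj E \<Longrightarrow> u \<in> V \<and> v \<in> V \<and> u \<noteq> v \<and> {u,v} \<in> E"
proof -
  assume a: "(u,v) \<in> adj E"
  then have e: "{u,v} \<in> E" "u \<noteq> v" by (auto simp: adj_def)
  with sg obtain x y where "{u,v} = {x,y}" "x \<in> V" "y \<in> V"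
    unfolding simple_graph_def by blast
  then show ?thesis using e by (auto simp: doubleton_eq_iff)
qed

lemma adj_sym: "(u,v) \<in> adj E \<Longrightarrow> (v,u) \<in> adj E"
  by (auto simp: adj_def insert_commute)

lemma walk_sym: "(u,v) \<in> adj E ^^ m \<Longrightarrow> (v,u) \<in> adj E ^^ m"
proof (induction m arbitrary: v)
  case 0 then show ?case by simp
next
  case (Suc m)
  then obtain w where "(u,w) \<in> adj E ^^ m" "(w,v) \<in> adj E" by (meson relpow_Suc_E)
  then have "(w,u) \<in> adj E ^^ m" using Suc.IH by simp
  then show ?case by (rule relpow_Suc_I2[OF adj_sym[OF \<open>(w,v) \<in> adj E\<close>]])
qed

lemma walk_V: "(u,v) \<in> adj E ^^ m \<Longrightarrow> u \<in> V \<Longrightarrow> v \<in> V"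
proof (induction m arbitrary: v)
  case 0 then show ?case by simp
next
  case (Suc m)
  then obtain w where "(u,w) \<in> adj E ^^ m" "(w,v) \<in> adj E" by (meson relpow_Suc_E)
  then show ?case using adj_V by blast
qed

lemma walk_dist: "u \<in> V \<Longrightarrow> v \<in> V \<Longrightarrow> (u,v) \<in> adj E ^^ dist E u v"
  unfolding dist_def using conn unfolding connected_graph_def by (meson LeastI)

lemma dist_le: "(u,v) \<in> adj E ^^ m \<Longrightarrow> dist E u v \<le> m"
  unfolding dist_def by (rule Least_le)

lemma dist_sym: "u \<in> V \<Longrightarrow> v \<in> V \<Longrightarrow> dist E u v = dist E v u"
  by (meson antisym dist_le walk_dist walk_sym)

lemma dist_tri: "u \<in> V \<Longrightarrow> v \<in> V \<Longrightarrow> w \<in> V \<Longrightarrow> dist E u w \<le> dist E u v + dist E v w"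
  by (meson dist_le relpow_trans walk_dist)

lemma dist_self: "dist E u u = 0"
  using dist_le[of u u 0] by simp

lemma dist0: "u \<in> V \<Longrightarrow> v \<in> V \<Longrightarrow> dist E u v = 0 \<Longrightarrow> u = v"
  using walk_dist[of u v] by simp

lemma dist_adj: "(u,v) \<in> adj E \<Longrightarrow> dist E u v \<le> 1"
  using dist_le[of u v 1] by simp

lemma dist1_iff: "u \<in> V \<Longrightarrow> v \<in> V \<Longrightarrow> dist E u v = 1 \<longleftrightarrow> (u,v) \<in> adj E"
proof
  assume "u \<in> V" "v \<in> V" "dist E u v = 1"
  then show "(u,v) \<in> adj E" using walk_dist[of u v] by simp
next
  assume a: "u \<in> V" "v \<in> V" "(u,v) \<in> adj E"
  then have "u \<noteq> v" using adj_V by blast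
  then have "dist E u v \<noteq> 0" using dist0 a by blast
  then show "dist E u v = 1" using dist_adj[OF a(3)] by simp
qed

lemma lay_adj: "(u,v) \<in> adj E \<Longrightarrow> lay v \<le> lay u + 1"
  using dist_tri[of s u v] dist_adj[of u v] adj_V sV by fastforce

lemma lay_walk: "(u,v) \<in> adj E ^^ m \<Longrightarrow> lay v \<le> lay u + m"
proof (induction m arbitrary: v)
  case 0 then show ?case by simp
next
  case (Suc m)
  then obtain w where "(u,w) \<in> adj E ^^ m" "(w,v) \<in> adj E" by (meson relpow_Suc_E)
  then show ?case using Suc.IH[of w] lay_adj[of w v] by simp
qed

definition Rw :: "nat \<Rightarrow> nat \<Rightarrow> (nat \<times> nat) set" where
  "Rw a r = {(y,z). (y,z) \<in> adj E \<and> lay a \<le> lay y \<and> lay a \<le> lay z \<and> lay y \<le> lay a + r \<and> lay z \<le> lay a + r}"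

lemma Rw_mono: "r \<le> r' \<Longrightarrow> Rw a r \<subseteq> Rw a r'"
  unfolding Rw_def by auto

lemma desc_walk:
  "(a,x) \<in> adj E ^^ r \<Longrightarrow> lay x = lay a + r \<Longrightarrow> (a,x) \<in> Rw a r ^^ r"
proof (induction r arbitrary: x)
  case 0 then show ?case by simp
next
  case (Suc r)
  then obtain y where y: "(a,y) \<in> adj E ^^ r" "(y,x) \<in> adj E" by (meson relpow_Suc_E)
  have "lay y \<le> lay a + r" using lay_walk[OF y(1)] .
  moreover have "lay x \<le> lay y + 1" using lay_adj[OF y(2)] .
  ultimately have ly: "lay y = lay a + r" using Suc.prems(2) by simp
  have "(a,y) \<in> Rw a r ^^ r" using Suc.IH[OF y(1) ly] .
  then have "(a,y) \<in> Rw a (Suc r) ^^ r"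
    using relpow_mono_set[OF Rw_mono[of r "Suc r" a]] by auto
  moreover have "(y,x) \<in> Rw a (Suc r)"
    using y(2) ly Suc.prems(2) unfolding Rw_def by simp
  ultimately show ?case by (rule relpow_Suc_I)
qed

lemma desc_comp:
  assumes "(a,x) \<in> adj E ^^ r" "lay x = lay a + r" "a \<in> V" "j \<le> lay a"
  shows "x \<in> cmp j a"
proof -
  let ?W = "layers_ge V E s j"
  have "Rw a r ^^ r \<subseteq> (adj E \<inter> ?W \<times> ?W) ^^ r"
    apply (rule relpow_mono_set) using assms(4) adj_V by (auto simp: layers_ge_def Rw_def)
  then have "(a,x) \<in> (adj E \<inter> ?W \<times> ?W) ^^ r" using desc_walk[OF assms(1,2)] by blast
  then have "(a,x) \<in> (adj E \<inter> ?W \<times> ?W)\<^sup>*" by (rule relpow_imp_rtrancl)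
  moreover have "x \<in> ?W" using walk_V[OF assms(1,3)] assms(2,4) by (simp add: layers_ge_def)
  ultimately show ?thesis by (simp add: component_in_def)
qed

lemma desc_Ei:
  assumes "(a,x) \<in> adj E ^^ r" "lay x = lay a + r" "lay x < ii"
  shows "(a,x) \<in> adj Ei ^^ r"
proof -
  have "Rw a r \<subseteq> adj Ei"
  proof
    fix p assume p: "p \<in> Rw a r"
    then obtain y z where yz: "p = (y,z)" "(y,z) \<in> adj E" "lay y \<le> lay a + r" "lay z \<le> lay a + r"
      unfolding Rw_def by blast
    from adj_V[OF yz(2)] have "y \<in> V" "z \<in> V" "y \<noteq> z" "{y,z} \<in> E" by auto
    then show "p \<in> adj Ei" using yz assms(2,3) by (simp add: adj_def layers_lt_def)
  qed
  then have "Rw a r ^^ r \<subseteq> (adj Ei) ^^ r" by (rule relpow_mono_set)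
  then show ?thesis using desc_walk[OF assms(1,2)] by blast
qed

lemma ancestor:
  assumes "x \<in> V" "j \<le> lay x"
  shows "\<exists>a. a \<in> V \<and> lay a = j \<and> (a,x) \<in> adj E ^^ (lay x - j)"
proof -
  have "(s,x) \<in> adj E ^^ (j + (lay x - j))" using walk_dist[OF sV assms(1)] assms(2) by simp
  then obtain a where a: "(s,a) \<in> adj E ^^ j" "(a,x) \<in> adj E ^^ (lay x - j)"
    unfolding relpow_add by blast
  have "lay a \<le> j" using dist_le[OF a(1)] .
  moreover have "lay x \<le> lay a + (lay x - j)" using lay_walk[OF a(2)] .
  ultimately have "lay a = j" using assms(2) by simp
  then show ?thesis using a walk_V[OF a(1) sV] by blast
qed

end


context grf begin

abbreviation "inP j P x \<equiv> \<exists>p\<in>P. x \<in> cmp j p"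

lemma cmp_iff: "y \<in> cmp j x \<longleftrightarrow> y \<in> layers_ge V E s j \<and> (x,y) \<in> (adj E \<inter> layers_ge V E s j \<times> layers_ge V E s j)\<^sup>*"
  by (simp add: component_in_def)

lemma cmp_V: "y \<in> cmp j x \<Longrightarrow> y \<in> V \<and> j \<le> lay y"
  by (simp add: component_in_def layers_ge_def)

lemma cmp_self: "x \<in> V \<Longrightarrow> j \<le> lay x \<Longrightarrow> x \<in> cmp j x"
  by (simp add: component_in_def layers_ge_def)

lemma cmp_sym: assumes "y \<in> cmp j x" shows "x \<in> cmp j y"
proof -
  let ?W = "layers_ge V E s j"
  let ?R = "adj E \<inter> ?W \<times> ?W"
  have y: "y \<in> ?W" "(x,y) \<in> ?R\<^sup>*" using assms by (simp_all add: component_in_def)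
  have "x \<in> ?W" using y(2)
  proof (cases rule: converse_rtranclE)
    case base then show ?thesis using y(1) by simp
  next
    case (step z) then show ?thesis by blast
  qed
  moreover have "sym ?R" unfolding sym_def using adj_sym by blast
  then have "sym (?R\<^sup>*)" by (rule sym_rtrancl)
  then have "(y,x) \<in> ?R\<^sup>*" using y(2) unfolding sym_def by blast
  ultimately show ?thesis by (simp add: component_in_def)
qed

lemma cmp_trans: "y \<in> cmp j x \<Longrightarrow> z \<in> cmp j y \<Longrightarrow> z \<in> cmp j x"
  unfolding component_in_def using rtrancl_trans by fastforce

lemma cmp_eq: "y \<in> cmp j x \<Longrightarrow> cmp j y = cmp j x"
  using cmp_sym cmp_trans by blast

lemma cmp_mono: assumes "j \<le> j'" shows "cmp j' x \<subseteq> cmp j x"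
proof
  fix y assume "y \<in> cmp j' x"
  then have y: "y \<in> layers_ge V E s j'" "(x,y) \<in> (adj E \<inter> layers_ge V E s j' \<times> layers_ge V E s j')\<^sup>*"
    by (simp_all add: component_in_def)
  have W: "layers_ge V E s j' \<subseteq> layers_ge V E s j" using assms by (auto simp: layers_ge_def)
  then have "adj E \<inter> layers_ge V E s j' \<times> layers_ge V E s j' \<subseteq> adj E \<inter> layers_ge V E s j \<times> layers_ge V E s j"
    by blast
  then have "(x,y) \<in> (adj E \<inter> layers_ge V E s j \<times> layers_ge V E s j)\<^sup>*"
    using y(2) rtrancl_mono by blast
  then show "y \<in> cmp j x" using y(1) W by (auto simp: component_in_def)
qed

lemma cmp_adj: assumes "(x,y) \<in> adj E" "j \<le> lay x" "j \<le> lay y" shows "y \<in> cmp j x"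
proof -
  have "x \<in> V" "y \<in> V" using adj_V[OF assms(1)] by auto
  then have "(x,y) \<in> adj E \<inter> layers_ge V E s j \<times> layers_ge V E s j"
    using assms by (simp add: layers_ge_def)
  then show ?thesis using \<open>y \<in> V\<close> assms(3) by (auto simp: component_in_def layers_ge_def)
qed

lemma parts_atE:
  assumes "P \<in> parts_at V E s j"
  shows "P \<noteq> {}" "P \<subseteq> layer V E s j" "\<And>p. p \<in> P \<Longrightarrow> P = cmp j p \<inter> layer V E s j"
proof -
  obtain x where x: "x \<in> layer V E s j" "P = cmp j x \<inter> layer V E s j"
    using assms unfolding parts_at_def by blast
  then have "x \<in> cmp j x" using cmp_self by (simp add: layer_def)
  then show "P \<noteq> {}" using x by blast
  show "P \<subseteq> layer V E s j" using x by blast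
  fix p assume "p \<in> P"
  then have "p \<in> cmp j x" using x by blast
  then show "P = cmp j p \<inter> layer V E s j" using x cmp_eq by simp
qed

lemma part_of: "x \<in> layer V E s j \<Longrightarrow> cmp j x \<inter> layer V E s j \<in> parts_at V E s j"
  unfolding parts_at_def by blast

lemma part_of_mem: "x \<in> layer V E s j \<Longrightarrow> x \<in> cmp j x \<inter> layer V E s j"
  using cmp_self by (simp add: layer_def)

lemma parts_disj: "P \<in> parts_at V E s j \<Longrightarrow> P' \<in> parts_at V E s j \<Longrightarrow> p \<in> P \<Longrightarrow> p \<in> P' \<Longrightarrow> P = P'"
  using parts_atE(3) by metis

lemma part_lay: "P \<in> parts_at V E s j \<Longrightarrow> p \<in> P \<Longrightarrow> p \<in> V \<and> lay p = j"
  using parts_atE(2) by (fastforce simp: layer_def)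

lemma adj_Ei_sub: "adj Ei \<subseteq> adj E"
  by (auto simp: adj_def)

lemma EQa:
  assumes P: "P \<in> parts_at V E s j" and x: "x \<in> V" "j \<le> lay x" and inp: "inP j P x"
  shows "\<exists>p\<in>P. dist E p x = lay x - j \<and> (lay x < ii \<longrightarrow> (p,x) \<in> adj Ei ^^ (lay x - j))"
proof -
  obtain p where p: "p \<in> P" "x \<in> cmp j p" using inp by blast
  obtain a where a: "a \<in> V" "lay a = j" "(a,x) \<in> adj E ^^ (lay x - j)" using ancestor[OF x] by blast
  have lx: "lay x = lay a + (lay x - j)" using a(2) x(2) by simp
  have "x \<in> cmp j a" using desc_comp[OF a(3) lx a(1)] a(2) by simp
  then have "a \<in> cmp j x" by (rule cmp_sym)
  then have "a \<in> cmp j p" using p(2) cmp_trans by blast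
  moreover have "a \<in> layer V E s j" using a by (simp add: layer_def)
  ultimately have aP: "a \<in> P" using parts_atE(3)[OF P p(1)] by blast
  have "dist E a x \<le> lay x - j" using dist_le[OF a(3)] .
  moreover have "lay x \<le> lay a + dist E a x" using dist_tri[OF sV a(1) x(1)] .
  ultimately have "dist E a x = lay x - j" using a(2) by simp
  moreover have "lay x < ii \<longrightarrow> (a,x) \<in> adj Ei ^^ (lay x - j)" using desc_Ei[OF a(3) lx] by blast
  ultimately show ?thesis using aP by blast
qed

lemma EQb:
  assumes P: "P \<in> parts_at V E s j" and p: "p \<in> P" and w: "(p,x) \<in> adj E ^^ (lay x - j)" and x: "j \<le> lay x"
  shows "x \<in> cmp j p"
proof -
  have "p \<in> V" "lay p = j" using part_lay[OF P p] by auto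
  then show ?thesis using desc_comp[OF w _ \<open>p \<in> V\<close>] x by simp
qed

lemma EQb_Ei:
  assumes P: "P \<in> parts_at V E s j" and p: "p \<in> P" and w: "(p,x) \<in> adj Ei ^^ (lay x - j)" and x: "j \<le> lay x"
  shows "x \<in> cmp j p"
proof -
  have "(p,x) \<in> adj E ^^ (lay x - j)" using relpow_mono_set[OF adj_Ei_sub] w by blast
  then show ?thesis using EQb[OF P p _ x] by blast
qed

lemma finite_nbr: "finite {v. (y,v) \<in> adj E}"
  using finV adj_V by (metis (no_types, lifting) finite_subset mem_Collect_eq subsetI)

lemma card_nbr: assumes "y \<in> V" shows "card {v. (y,v) \<in> adj E} \<le> D"
proof -
  have "{v. (y,v) \<in> adj E} = {v. {y, v} \<in> E \<and> y \<noteq> v}" by (auto simp: adj_def)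
  then have "card {v. (y,v) \<in> adj E} = degree E y" by (simp add: degree_def)
  also have "\<dots> \<le> D" unfolding max_degree_def using finV assms by simp
  finally show ?thesis .
qed

lemma sphere_bound: assumes "p \<in> V" shows "card {x\<in>V. dist E p x = t} \<le> D ^ t"
proof (induction t)
  case 0
  have "{x\<in>V. dist E p x = 0} \<subseteq> {p}" using dist0[OF assms] by blast
  then have "card {x\<in>V. dist E p x = 0} \<le> card {p}" by (rule card_mono[rotated]) simp
  then show ?case by simp
next
  case (Suc t)
  let ?S = "{x\<in>V. dist E p x = t}"
  have sub: "{x\<in>V. dist E p x = Suc t} \<subseteq> (\<Union>y\<in>?S. {v. (y,v) \<in> adj E})"
  proof
    fix x assume x: "x \<in> {x\<in>V. dist E p x = Suc t}"
    then have dx: "dist E p x = Suc t" and xV: "x \<in> V" by auto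
    have "(p,x) \<in> adj E ^^ dist E p x" using walk_dist[OF assms xV] .
    then have "(p,x) \<in> adj E ^^ Suc t" by (simp only: dx)
    then obtain y where y: "(p,y) \<in> adj E ^^ t" "(y,x) \<in> adj E" by (meson relpow_Suc_E)
    have yV: "y \<in> V" using adj_V[OF y(2)] by blast
    have "dist E p y \<le> t" using dist_le[OF y(1)] .
    moreover have "dist E p x \<le> dist E p y + dist E y x" using dist_tri[OF assms yV, of x] x by simp
    moreover have "dist E y x \<le> 1" using dist_adj[OF y(2)] .
    ultimately have "dist E p y = t" using x by simp
    then show "x \<in> (\<Union>y\<in>?S. {v. (y,v) \<in> adj E})" using yV y(2) by blast
  qed
  have finS: "finite ?S" using finV by simp
  have "card {x\<in>V. dist E p x = Suc t} \<le> card (\<Union>y\<in>?S. {v. (y,v) \<in> adj E})"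
  proof (rule card_mono)
    show "finite (\<Union>y\<in>?S. {v. (y,v) \<in> adj E})" using finS finite_nbr by blast
  qed (rule sub)
  also have "\<dots> \<le> (\<Sum>y\<in>?S. card {v. (y,v) \<in> adj E})" by (rule card_UN_le[OF finS])
  also have "\<dots> \<le> (\<Sum>y\<in>?S. D)" by (rule sum_mono) (use card_nbr in auto)
  also have "\<dots> = card ?S * D" by simp
  also have "\<dots> \<le> D ^ t * D" using Suc.IH by simp
  finally show ?case by (simp add: mult.commute)
qed

lemma geom: "(\<Sum>t\<le>r. D ^ t) \<le> 2 * D ^ r"
proof (induction r)
  case 0 then show ?case by simp
next
  case (Suc r)
  have "2 * D ^ r \<le> D ^ Suc r" using D2 by simp
  moreover have "(\<Sum>t\<le>Suc r. D ^ t) = (\<Sum>t\<le>r. D ^ t) + D ^ Suc r" by simp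
  ultimately show ?case using Suc.IH by linarith
qed

lemma ball_bound: assumes "p \<in> V" shows "card {x\<in>V. dist E p x \<le> r} \<le> 2 * D ^ r"
proof -
  have eq: "{x\<in>V. dist E p x \<le> r} = (\<Union>t\<in>{..r}. {x\<in>V. dist E p x = t})" by auto
  have "card {x\<in>V. dist E p x \<le> r} \<le> (\<Sum>t\<le>r. card {x\<in>V. dist E p x = t})"
    unfolding eq by (rule card_UN_le) simp
  also have "\<dots> \<le> (\<Sum>t\<le>r. D ^ t)" by (rule sum_mono) (use sphere_bound[OF assms] in auto)
  also have "\<dots> \<le> 2 * D ^ r" by (rule geom)
  finally show ?thesis .
qed

lemma part_diam: assumes P: "P \<in> parts_at V E s j" and p: "p \<in> P" "q \<in> P" shows "dist E p q \<le> l"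
proof -
  let ?X = "{dist E u v | u v P. P \<in> parts V E s \<and> u \<in> P \<and> v \<in> P}"
  have "?X \<subseteq> (\<lambda>(u,v). dist E u v) ` (V \<times> V)"
  proof
    fix d assume "d \<in> ?X"
    then obtain u v P' where "d = dist E u v" "P' \<in> parts V E s" "u \<in> P'" "v \<in> P'" by blast
    moreover then obtain j' where "P' \<in> parts_at V E s j'" by (auto simp: parts_def)
    ultimately show "d \<in> (\<lambda>(u,v). dist E u v) ` (V \<times> V)" using part_lay by blast
  qed
  then have "finite ?X" using finV by (meson finite_SigmaI finite_imageI finite_subset)
  moreover have "dist E p q \<in> ?X" using P p unfolding parts_def by blast
  ultimately have "dist E p q \<le> tree_length V E s" unfolding tree_length_def by (rule Max_ge)
  then show ?thesis using lT by simp
qed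

lemma region_bound:
  assumes P: "P \<in> parts_at V E s j" and m: "j \<le> m"
  shows "card {x \<in> layer V E s m. inP j P x} \<le> 2 * D ^ (l + (m - j))"
proof -
  obtain p0 where p0: "p0 \<in> P" using parts_atE(1)[OF P] by blast
  have p0V: "p0 \<in> V" using part_lay[OF P p0] by blast
  have "{x \<in> layer V E s m. inP j P x} \<subseteq> {x\<in>V. dist E p0 x \<le> l + (m - j)}"
  proof
    fix x assume x: "x \<in> {x \<in> layer V E s m. inP j P x}"
    then have xV: "x \<in> V" "lay x = m" by (auto simp: layer_def)
    obtain p where p: "p \<in> P" "dist E p x = lay x - j" using EQa[OF P xV(1) _] x xV m by auto
    have pV: "p \<in> V" using part_lay[OF P p(1)] by blast
    have "dist E p0 x \<le> dist E p0 p + dist E p x" by (rule dist_tri[OF p0V pV xV(1)])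
    also have "\<dots> \<le> l + (m - j)" using part_diam[OF P p0 p(1)] p(2) xV(2) by simp
    finally show "x \<in> {x\<in>V. dist E p0 x \<le> l + (m - j)}" using xV by simp
  qed
  then have "card {x \<in> layer V E s m. inP j P x} \<le> card {x\<in>V. dist E p0 x \<le> l + (m - j)}"
    by (rule card_mono[rotated]) (use finV in simp)
  also have "\<dots> \<le> 2 * D ^ (l + (m - j))" by (rule ball_bound[OF p0V])
  finally show ?thesis .
qed

lemma layer_bound: "card (layer V E s m) \<le> 2 * D ^ m"
proof -
  have "layer V E s m \<subseteq> {x\<in>V. dist E s x \<le> m}" by (auto simp: layer_def)
  then have "card (layer V E s m) \<le> card {x\<in>V. dist E s x \<le> m}"
    by (rule card_mono[rotated]) (use finV in simp)
  also have "\<dots> \<le> 2 * D ^ m" by (rule ball_bound[OF sV])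
  finally show ?thesis .
qed

end


primrec qbind :: "('q,'a,'r) qtree \<Rightarrow> ('r \<Rightarrow> ('q,'a,'s) qtree) \<Rightarrow> ('q,'a,'s) qtree" where
  "qbind (Ret r) g = g r"
| "qbind (Ask q f) g = Ask q (\<lambda>a. qbind (f a) g)"

lemma run_result_qbind[simp]: "run_result orc (qbind t g) = run_result orc (g (run_result orc t))"
  by (induction t) auto

lemma run_queries_qbind[simp]: "run_queries orc (qbind t g) = run_queries orc t + run_queries orc (g (run_result orc t))"
  by (induction t) auto

fun askall :: "'q list \<Rightarrow> ('q,'a,'q \<Rightarrow> 'a) qtree" where
  "askall [] = Ret (\<lambda>_. undefined)"
| "askall (q # qs) = Ask q (\<lambda>a. qbind (askall qs) (\<lambda>f. Ret (f(q := a))))"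

lemma askall_result: "q \<in> set qs \<Longrightarrow> run_result orc (askall qs) q = orc q"
  by (induction qs) auto

lemma askall_queries[simp]: "run_queries orc (askall qs) = length qs"
  by (induction qs) auto

fun collect :: "('x \<Rightarrow> ('q,'a,'r) qtree) \<Rightarrow> 'x list \<Rightarrow> ('q,'a,'x \<Rightarrow> 'r) qtree" where
  "collect g [] = Ret (\<lambda>_. undefined)"
| "collect g (x # xs) = qbind (g x) (\<lambda>K. qbind (collect g xs) (\<lambda>m. Ret (m(x := K))))"

lemma collect_result: "x \<in> set xs \<Longrightarrow> run_result orc (collect g xs) x = run_result orc (g x)"
  by (induction xs) auto

lemma collect_queries: "run_queries orc (collect g xs) = sum_list (map (\<lambda>x. run_queries orc (g x)) xs)"
  by (induction xs) auto

definition lst :: "'a set \<Rightarrow> 'a list" where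
  "lst A = (SOME xs. set xs = A \<and> distinct xs)"

lemma lst: assumes "finite A" shows "set (lst A) = A" "distinct (lst A)" "length (lst A) = card A"
proof -
  have "\<exists>xs. set xs = A \<and> distinct xs" using finite_distinct_list[OF assms] .
  then have "set (lst A) = A \<and> distinct (lst A)" unfolding lst_def by (rule someI_ex)
  then show "set (lst A) = A" "distinct (lst A)" "length (lst A) = card A"
    using distinct_card by fastforce+
qed

definition PsAt :: "(nat \<Rightarrow> nat set) \<Rightarrow> nat set set \<Rightarrow> nat \<Rightarrow> nat set set" where
  "PsAt Lf Ps j = {P \<in> Ps. P \<noteq> {} \<and> P \<subseteq> Lf j}"

definition Desc :: "nat set set \<Rightarrow> nat set \<Rightarrow> nat \<Rightarrow> nat \<Rightarrow> bool" where
  "Desc Ei c x r \<longleftrightarrow> (\<exists>p\<in>c. (p,x) \<in> adj Ei ^^ r)"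

definition Below :: "(nat \<Rightarrow> nat set) \<Rightarrow> nat set set \<Rightarrow> nat set set \<Rightarrow> nat \<Rightarrow> nat \<Rightarrow> nat set \<Rightarrow> nat set set" where
  "Below Lf Ei Ps k j c = {Q \<in> PsAt Lf Ps (k - 1). \<exists>q\<in>Q. Desc Ei c q (k - 1 - j)}"

definition Children :: "(nat \<Rightarrow> nat set) \<Rightarrow> nat set set \<Rightarrow> nat set set \<Rightarrow> nat \<Rightarrow> nat set \<Rightarrow> nat set set" where
  "Children Lf Ei Ps j c = {P' \<in> PsAt Lf Ps (Suc j). \<exists>x\<in>P'. Desc Ei c x 1}"

definition good :: "(nat \<Rightarrow> nat set) \<Rightarrow> nat set set \<Rightarrow> nat set set \<Rightarrow> nat \<Rightarrow> nat set set \<Rightarrow> nat \<Rightarrow> nat set \<Rightarrow> bool" where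
  "good Lf Ei Ps k K j c \<longleftrightarrow> j < k \<and> c \<in> PsAt Lf Ps j \<and> card K < 2 * card (Below Lf Ei Ps k j c \<inter> K)"

definition jstar :: "(nat \<Rightarrow> nat set) \<Rightarrow> nat set set \<Rightarrow> nat set set \<Rightarrow> nat \<Rightarrow> nat set set \<Rightarrow> nat" where
  "jstar Lf Ei Ps k K = Max {j. \<exists>c. good Lf Ei Ps k K j c}"

definition cstar :: "(nat \<Rightarrow> nat set) \<Rightarrow> nat set set \<Rightarrow> nat set set \<Rightarrow> nat \<Rightarrow> nat set set \<Rightarrow> nat set" where
  "cstar Lf Ei Ps k K = (SOME c. good Lf Ei Ps k K (jstar Lf Ei Ps k K) c)"

definition qset :: "(nat \<Rightarrow> nat set) \<Rightarrow> nat set set \<Rightarrow> nat set set \<Rightarrow> nat \<Rightarrow> nat set set \<Rightarrow> nat set" where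
  "qset Lf Ei Ps k K = \<Union> (Children Lf Ei Ps (jstar Lf Ei Ps k K) (cstar Lf Ei Ps k K))"

definition posc :: "(nat \<Rightarrow> nat set) \<Rightarrow> nat set set \<Rightarrow> nat set set \<Rightarrow> nat \<Rightarrow> nat \<Rightarrow> nat \<Rightarrow> nat set set \<Rightarrow> (nat \<times> nat \<Rightarrow> nat) \<Rightarrow> nat set set" where
  "posc Lf Ei Ps k i u K ans = {c' \<in> Children Lf Ei Ps (jstar Lf Ei Ps k K) (cstar Lf Ei Ps k K).
      \<exists>x\<in>c'. ans (u,x) = i - Suc (jstar Lf Ei Ps k K)}"

definition newK :: "(nat \<Rightarrow> nat set) \<Rightarrow> nat set set \<Rightarrow> nat set set \<Rightarrow> nat \<Rightarrow> nat \<Rightarrow> nat \<Rightarrow> nat set set \<Rightarrow> (nat \<times> nat \<Rightarrow> nat) \<Rightarrow> nat set set" where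
  "newK Lf Ei Ps k i u K ans = (if posc Lf Ei Ps k i u K ans \<noteq> {}
     then K \<inter> Below Lf Ei Ps k (Suc (jstar Lf Ei Ps k K)) (SOME c'. c' \<in> posc Lf Ei Ps k i u K ans)
     else K - Below Lf Ei Ps k (jstar Lf Ei Ps k K) (cstar Lf Ei Ps k K))"

fun search :: "(nat \<Rightarrow> nat set) \<Rightarrow> nat set set \<Rightarrow> nat set set \<Rightarrow> nat \<Rightarrow> nat \<Rightarrow> nat \<Rightarrow> nat \<Rightarrow> nat set set
    \<Rightarrow> (nat \<times> nat, nat, nat set set) qtree" where
  "search Lf Ei Ps k i 0 u K = Ret K"
| "search Lf Ei Ps k i (Suc f) u K = (if card K \<le> 1 then Ret K else
     qbind (askall (map (\<lambda>x. (u,x)) (lst (qset Lf Ei Ps k K))))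
       (\<lambda>ans. search Lf Ei Ps k i f u (newK Lf Ei Ps k i u K ans)))"

definition Cand :: "(nat \<Rightarrow> nat set) \<Rightarrow> nat set set \<Rightarrow> nat \<Rightarrow> nat \<Rightarrow> (nat \<Rightarrow> nat set set) \<Rightarrow> nat \<Rightarrow> nat set" where
  "Cand Lf Ei k i m u = (if k = 0 then Lf (i - 1) \<union> Lf i else
     {v \<in> Lf (i - 1). \<exists>Q\<in>m u. Desc Ei Q v (i - k)} \<union> {x \<in> Lf i. m x = m u})"

definition prs :: "(nat \<Rightarrow> nat set) \<Rightarrow> nat set set \<Rightarrow> nat \<Rightarrow> nat \<Rightarrow> (nat \<Rightarrow> nat set set) \<Rightarrow> (nat \<times> nat) set" where
  "prs Lf Ei k i m = Sigma (Lf i) (Cand Lf Ei k i m)"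

definition outG :: "(nat \<Rightarrow> nat set) \<Rightarrow> nat set set \<Rightarrow> nat \<Rightarrow> nat \<Rightarrow> (nat \<Rightarrow> nat set set) \<Rightarrow> (nat \<times> nat \<Rightarrow> nat) \<Rightarrow> nat set \<times> nat set set" where
  "outG Lf Ei k i m ans = ({v. \<exists>j<Suc i. v \<in> Lf j}, Ei \<union> {{u,v} | u v. (u,v) \<in> prs Lf Ei k i m \<and> ans (u,v) = 1})"

definition Aproc :: procedure where
  "Aproc inp = (case inp of (l, k, Lf, (W, Ei), (Ps, Es)) \<Rightarrow>
     qbind (collect (\<lambda>u. search Lf Ei Ps k (k + l + 2) (card (PsAt Lf Ps (k - 1))) u (PsAt Lf Ps (k - 1)))
              (lst (Lf (k + l + 2))))
       (\<lambda>m. qbind (askall (lst (prs Lf Ei k (k + l + 2) m)))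
         (\<lambda>ans. Ret (outG Lf Ei k (k + l + 2) m ans))))"



context grf begin

abbreviation "Lf \<equiv> layer V E s"
abbreviation "Ps \<equiv> (\<Union>j<k. parts_at V E s j)"

lemma finite_layer: "finite (layer V E s j)"
  using finV by (simp add: layer_def)

lemma finite_parts_at: "finite (parts_at V E s j)"
proof -
  have "parts_at V E s j = (\<lambda>x. cmp j x \<inter> layer V E s j) ` layer V E s j"
    unfolding parts_at_def by blast
  then show ?thesis using finite_layer by simp
qed

lemma card_parts_at: "card (parts_at V E s j) \<le> card V"
proof -
  have eq: "parts_at V E s j = (\<lambda>x. cmp j x \<inter> layer V E s j) ` layer V E s j"
    unfolding parts_at_def by blast
  have "card ((\<lambda>x. cmp j x \<inter> layer V E s j) ` layer V E s j) \<le> card (layer V E s j)"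
    by (rule card_image_le[OF finite_layer])
  then have "card (parts_at V E s j) \<le> card (layer V E s j)" by (simp only: eq)
  also have "\<dots> \<le> card V" by (rule card_mono[OF finV]) (auto simp: layer_def)
  finally show ?thesis .
qed

lemma layer_disj: "x \<in> layer V E s j \<Longrightarrow> x \<in> layer V E s j' \<Longrightarrow> j = j'"
  by (simp add: layer_def)

lemma PsAt_eq: assumes "j < k" shows "PsAt Lf Ps j = parts_at V E s j"
proof
  show "PsAt Lf Ps j \<subseteq> parts_at V E s j"
  proof
    fix P assume "P \<in> PsAt Lf Ps j"
    then have P: "P \<in> Ps" "P \<noteq> {}" "P \<subseteq> layer V E s j" by (auto simp: PsAt_def)
    then obtain j' where j': "P \<in> parts_at V E s j'" by blast
    obtain x where "x \<in> P" using P(2) by blast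
    then have "j' = j" using parts_atE(2)[OF j'] P(3) layer_disj by blast
    then show "P \<in> parts_at V E s j" using j' by simp
  qed
next
  show "parts_at V E s j \<subseteq> PsAt Lf Ps j"
  proof
    fix P assume P: "P \<in> parts_at V E s j"
    then have "P \<in> Ps" using assms by blast
    then show "P \<in> PsAt Lf Ps j" using parts_atE(1,2)[OF P] unfolding PsAt_def by blast
  qed
qed

lemma Desc_sem:
  assumes c: "c \<in> parts_at V E s j" and x: "x \<in> V" "j \<le> lay x" "lay x < ii"
  shows "Desc Ei c x (lay x - j) \<longleftrightarrow> inP j c x"
proof
  assume "Desc Ei c x (lay x - j)"
  then obtain p where "p \<in> c" "(p,x) \<in> adj Ei ^^ (lay x - j)" by (auto simp: Desc_def)
  then show "inP j c x" using EQb_Ei[OF c _ _ x(2)] by blast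
next
  assume "inP j c x"
  then show "Desc Ei c x (lay x - j)" using EQa[OF c x(1,2)] x(3) by (auto simp: Desc_def)
qed

lemma Below_sem:
  assumes k1: "1 \<le> k" and j: "j \<le> k - 1" and c: "c \<in> parts_at V E s j"
  shows "Below Lf Ei Ps k j c = {Q \<in> parts_at V E s (k - 1). \<exists>q\<in>Q. inP j c q}"
proof -
  have H: "\<And>Q q. Q \<in> parts_at V E s (k - 1) \<Longrightarrow> q \<in> Q \<Longrightarrow> Desc Ei c q (k - 1 - j) \<longleftrightarrow> inP j c q"
  proof -
    fix Q q assume Q: "Q \<in> parts_at V E s (k - 1)" "q \<in> Q"
    then have q: "q \<in> V" "lay q = k - 1" using part_lay by auto
    then show "Desc Ei c q (k - 1 - j) \<longleftrightarrow> inP j c q" using Desc_sem[OF c q(1)] j by simp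
  qed
  have PA: "PsAt Lf Ps (k - 1) = parts_at V E s (k - 1)" using PsAt_eq k1 by simp
  show ?thesis unfolding Below_def PA
  proof (intro Collect_cong conj_cong refl)
    fix Q assume Q: "Q \<in> parts_at V E s (k - 1)"
    show "(\<exists>q\<in>Q. Desc Ei c q (k - 1 - j)) = (\<exists>q\<in>Q. inP j c q)" using H[OF Q] by blast
  qed
qed

lemma Children_sem:
  assumes j: "Suc j < k" and c: "c \<in> parts_at V E s j"
  shows "Children Lf Ei Ps j c = {P' \<in> parts_at V E s (Suc j). \<exists>x\<in>P'. inP j c x}"
proof -
  have H: "\<And>P' x. P' \<in> parts_at V E s (Suc j) \<Longrightarrow> x \<in> P' \<Longrightarrow> Desc Ei c x 1 \<longleftrightarrow> inP j c x"
  proof -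
    fix P' x assume P: "P' \<in> parts_at V E s (Suc j)" "x \<in> P'"
    then have x: "x \<in> V" "lay x = Suc j" using part_lay by auto
    then show "Desc Ei c x 1 \<longleftrightarrow> inP j c x" using Desc_sem[OF c x(1)] j by simp
  qed
  have PA: "PsAt Lf Ps (Suc j) = parts_at V E s (Suc j)" using PsAt_eq j by simp
  show ?thesis unfolding Children_def PA
  proof (intro Collect_cong conj_cong refl)
    fix P' assume Q: "P' \<in> parts_at V E s (Suc j)"
    show "(\<exists>x\<in>P'. Desc Ei c x 1) = (\<exists>x\<in>P'. inP j c x)" using H[OF Q] by blast
  qed
qed

lemma target_Below:
  assumes j: "j \<le> k - 1" and c: "c \<in> parts_at V E s j" and Q: "Q \<in> parts_at V E s (k - 1)" "inP (k - 1) Q u"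
  shows "(\<exists>q\<in>Q. inP j c q) \<longleftrightarrow> inP j c u"
proof
  assume "\<exists>q\<in>Q. inP j c q"
  then obtain q p where qp: "q \<in> Q" "p \<in> c" "q \<in> cmp j p" by blast
  obtain q0 where q0: "q0 \<in> Q" "u \<in> cmp (k - 1) q0" using Q(2) by blast
  have "q0 \<in> cmp (k - 1) q" using parts_atE(3)[OF Q(1) qp(1)] q0(1) by blast
  then have "cmp (k - 1) q0 = cmp (k - 1) q" by (rule cmp_eq)
  then have "u \<in> cmp (k - 1) q" using q0(2) by simp
  then have "u \<in> cmp j q" using cmp_mono[OF j] by blast
  then have "u \<in> cmp j p" using qp(3) cmp_trans by blast
  then show "inP j c u" using qp(2) by blast
next
  assume "inP j c u"
  then obtain p where p: "p \<in> c" "u \<in> cmp j p" by blast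
  obtain q0 where q0: "q0 \<in> Q" "u \<in> cmp (k - 1) q0" using Q(2) by blast
  have "u \<in> cmp j q0" using q0(2) cmp_mono[OF j] by blast
  then have "q0 \<in> cmp j u" by (rule cmp_sym)
  then have "q0 \<in> cmp j p" using p(2) cmp_trans by blast
  then show "\<exists>q\<in>Q. inP j c q" using q0(1) p(1) by blast
qed

lemma test_sem:
  assumes c: "c \<in> parts_at V E s j" and j: "j < ii" and u: "u \<in> layer V E s ii"
  shows "(\<exists>x\<in>c. dist E u x = ii - j) \<longleftrightarrow> inP j c u"
proof -
  have uV: "u \<in> V" "lay u = ii" using u by (auto simp: layer_def)
  show ?thesis
  proof
    assume "\<exists>x\<in>c. dist E u x = ii - j"
    then obtain x where x: "x \<in> c" "dist E u x = ii - j" by blast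
    have xV: "x \<in> V" using part_lay[OF c x(1)] by blast
    have "(x,u) \<in> adj E ^^ dist E x u" using walk_dist[OF xV uV(1)] .
    moreover have "dist E x u = lay u - j" using dist_sym[OF xV uV(1)] x(2) uV(2) by simp
    ultimately have "(x,u) \<in> adj E ^^ (lay u - j)" by simp
    then have "u \<in> cmp j x" using EQb[OF c x(1)] uV j by simp
    then show "inP j c u" using x(1) by blast
  next
    assume "inP j c u"
    then obtain p where p: "p \<in> c" "dist E p u = lay u - j" using EQa[OF c uV(1)] uV j by auto
    have "p \<in> V" using part_lay[OF c p(1)] by blast
    then have "dist E u p = ii - j" using dist_sym[OF _ uV(1)] p(2) uV(2) by simp
    then show "\<exists>x\<in>c. dist E u x = ii - j" using p(1) by blast
  qed
qed

lemma cover: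
  assumes c: "c \<in> parts_at V E s j" and inp: "inP j c u" and u: "u \<in> V" "Suc j \<le> lay u"
  shows "\<exists>c'\<in>parts_at V E s (Suc j). inP (Suc j) c' u \<and> (\<exists>x\<in>c'. inP j c x)"
proof -
  obtain a where a: "a \<in> V" "lay a = Suc j" "(a,u) \<in> adj E ^^ (lay u - Suc j)" using ancestor[OF u] by blast
  have lu: "lay u = lay a + (lay u - Suc j)" using a(2) u(2) by simp
  have ua: "u \<in> cmp (Suc j) a" using desc_comp[OF a(3) lu a(1)] a(2) by simp
  have al: "a \<in> layer V E s (Suc j)" using a by (simp add: layer_def)
  let ?c = "cmp (Suc j) a \<inter> layer V E s (Suc j)"
  have c': "?c \<in> parts_at V E s (Suc j)" by (rule part_of[OF al])
  have aC: "a \<in> ?c" by (rule part_of_mem[OF al])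
  obtain p where p: "p \<in> c" "u \<in> cmp j p" using inp by blast
  have "cmp (Suc j) a \<subseteq> cmp j a" by (rule cmp_mono) simp
  then have "u \<in> cmp j a" using ua by blast
  then have "a \<in> cmp j u" by (rule cmp_sym)
  then have "a \<in> cmp j p" using p(2) cmp_trans by blast
  then have "inP j c a" using p(1) by blast
  then have "\<exists>x\<in>?c. inP j c x" using aC by (rule bexI)
  moreover have "inP (Suc j) ?c u" using aC ua by (rule bexI[rotated])
  ultimately show ?thesis using c' by (intro bexI[of _ ?c]) simp_all
qed

lemma target_exists:
  assumes "u \<in> V" "j \<le> lay u"
  shows "\<exists>Q\<in>parts_at V E s j. inP j Q u"
proof -
  obtain a where a: "a \<in> V" "lay a = j" "(a,u) \<in> adj E ^^ (lay u - j)" using ancestor[OF assms] by blast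
  have lu: "lay u = lay a + (lay u - j)" using a(2) assms(2) by simp
  have ua: "u \<in> cmp j a" using desc_comp[OF a(3) lu a(1)] a(2) by simp
  have al: "a \<in> layer V E s j" using a by (simp add: layer_def)
  have "inP j (cmp j a \<inter> layer V E s j) u" using part_of_mem[OF al] ua by (rule bexI[rotated])
  then show ?thesis using part_of[OF al] by (rule bexI)
qed

lemma target_unique:
  assumes Q: "Q \<in> parts_at V E s j" "inP j Q u" and Q': "Q' \<in> parts_at V E s j" "inP j Q' u"
  shows "Q = Q'"
proof -
  obtain q where q: "q \<in> Q" "u \<in> cmp j q" using Q(2) by blast
  obtain q' where q': "q' \<in> Q'" "u \<in> cmp j q'" using Q'(2) by blast
  have "q' \<in> cmp j u" using q'(2) by (rule cmp_sym)
  then have "q' \<in> cmp j q" using q(2) cmp_trans by blast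
  moreover have "q' \<in> layer V E s j" using parts_atE(2)[OF Q'(1)] q'(1) by blast
  ultimately have "q' \<in> Q" using parts_atE(3)[OF Q(1) q(1)] by blast
  then show ?thesis using parts_disj[OF Q(1) Q'(1) _ q'(1)] by blast
qed

lemma bottom_Below:
  assumes c: "c \<in> parts_at V E s j"
  shows "{Q \<in> parts_at V E s j. \<exists>q\<in>Q. inP j c q} \<subseteq> {c}"
proof
  fix Q assume "Q \<in> {Q \<in> parts_at V E s j. \<exists>q\<in>Q. inP j c q}"
  then obtain q p where Q: "Q \<in> parts_at V E s j" "q \<in> Q" "p \<in> c" "q \<in> cmp j p" by blast
  have "q \<in> layer V E s j" using parts_atE(2)[OF Q(1)] Q(2) by blast
  then have "q \<in> c" using parts_atE(3)[OF c Q(3)] Q(4) by blast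
  then show "Q \<in> {c}" using parts_disj[OF Q(1) c Q(2)] by simp
qed

lemma root:
  shows "\<exists>c\<in>parts_at V E s 0. \<forall>x\<in>V. inP 0 c x"
proof -
  have sl: "s \<in> layer V E s 0" using sV dist_self by (simp add: layer_def)
  have sc: "s \<in> cmp 0 s \<inter> layer V E s 0" by (rule part_of_mem[OF sl])
  have "\<forall>x\<in>V. inP 0 (cmp 0 s \<inter> layer V E s 0) x"
  proof
    fix x assume x: "x \<in> V"
    have w: "(s,x) \<in> adj E ^^ lay x" using walk_dist[OF sV x] .
    have l: "lay x = lay s + lay x" using dist_self[of s] by simp
    have "x \<in> cmp 0 s" using desc_comp[OF w l sV] by simp
    then show "inP 0 (cmp 0 s \<inter> layer V E s 0) x" using sc by (rule bexI)
  qed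
  then show ?thesis using part_of[OF sl] by (rule bexI)
qed

lemma qset_sub:
  assumes c: "c \<in> parts_at V E s j" and j: "Suc j < k"
  shows "\<Union> (Children Lf Ei Ps j c) \<subseteq> {x \<in> layer V E s (Suc j). inP j c x}"
proof
  fix x assume "x \<in> \<Union> (Children Lf Ei Ps j c)"
  then obtain P' where P'0: "P' \<in> Children Lf Ei Ps j c" "x \<in> P'" by (rule UnionE)
  then have P': "P' \<in> parts_at V E s (Suc j)" "\<exists>y\<in>P'. inP j c y"
    unfolding Children_sem[OF j c] by simp_all
  obtain y where y1: "y \<in> P'" "inP j c y" using P'(2) by (rule bexE)
  obtain p where y: "p \<in> c" "y \<in> cmp j p" using y1(2) by (rule bexE)
  have "x \<in> cmp (Suc j) y \<inter> layer V E s (Suc j)" using parts_atE(3)[OF P'(1) y1(1)] P'0(2) by simp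
  then have xs: "x \<in> cmp (Suc j) y" "x \<in> layer V E s (Suc j)" by simp_all
  have "cmp (Suc j) y \<subseteq> cmp j y" by (rule cmp_mono) simp
  then have "x \<in> cmp j y" using xs(1) by (rule subsetD)
  then have "x \<in> cmp j p" using y(2) cmp_trans by blast
  then have "inP j c x" using y(1) by (rule bexI)
  then show "x \<in> {x \<in> layer V E s (Suc j). inP j c x}" using xs(2) by simp
qed

end


context grf begin

lemma step:
  assumes k1: "1 \<le> k" and u: "u \<in> layer V E s ii"
    and Q: "Q \<in> parts_at V E s (k - 1)" "inP (k - 1) Q u"
    and K: "K \<subseteq> parts_at V E s (k - 1)" "Q \<in> K" "2 \<le> card K"
  shows "finite (qset Lf Ei Ps k K)" "card (qset Lf Ei Ps k K) \<le> 2 * D ^ (l + 1)"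
    "(\<forall>x\<in>qset Lf Ei Ps k K. ans (u,x) = dist E u x) \<Longrightarrow>
       Q \<in> newK Lf Ei Ps k ii u K ans \<and> 2 * card (newK Lf Ei Ps k ii u K ans) \<le> card K
       \<and> newK Lf Ei Ps k ii u K ans \<subseteq> parts_at V E s (k - 1)"
proof -
  have finK: "finite K" using K(3) by (metis card.infinite not_numeral_le_zero)
  have uV: "u \<in> V" "lay u = ii" using u by (auto simp: layer_def)
  define J where "J = {j. \<exists>c. good Lf Ei Ps k K j c}"
  obtain c0 where c0: "c0 \<in> parts_at V E s 0" "\<forall>x\<in>V. inP 0 c0 x" using root by (rule bexE)
  have B0: "Below Lf Ei Ps k 0 c0 = {Q \<in> parts_at V E s (k - 1). \<exists>q\<in>Q. inP 0 c0 q}"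
    using Below_sem[OF k1 _ c0(1)] by simp
  have "parts_at V E s (k - 1) \<subseteq> Below Lf Ei Ps k 0 c0"
  proof
    fix Q' assume Q': "Q' \<in> parts_at V E s (k - 1)"
    obtain q where q: "q \<in> Q'" using parts_atE(1)[OF Q'] by blast
    have "q \<in> V" using part_lay[OF Q' q] by blast
    then have "inP 0 c0 q" using c0(2) by blast
    then have "\<exists>q\<in>Q'. inP 0 c0 q" using q by (rule bexI)
    then show "Q' \<in> Below Lf Ei Ps k 0 c0" unfolding B0 using Q' by simp
  qed
  then have "Below Lf Ei Ps k 0 c0 \<inter> K = K" using K(1) by blast
  then have "good Lf Ei Ps k K 0 c0" unfolding good_def using k1 PsAt_eq[of 0] c0(1) K(3) by simp
  then have J0: "0 \<in> J" unfolding J_def by blast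
  have finJ: "finite J"
  proof (rule finite_subset)
    show "J \<subseteq> {..<k}" unfolding J_def good_def by blast
  qed simp
  define j where "j = jstar Lf Ei Ps k K"
  define c where "c = cstar Lf Ei Ps k K"
  have jJ: "j \<in> J" unfolding j_def jstar_def J_def[symmetric] using finJ J0 by (metis Max_in empty_iff)
  have maxJ: "\<And>j'. j' \<in> J \<Longrightarrow> j' \<le> j" unfolding j_def jstar_def J_def[symmetric] using finJ by simp
  have gd: "good Lf Ei Ps k K j c"
  proof -
    obtain c' where "good Lf Ei Ps k K j c'" using jJ unfolding J_def by blast
    then show ?thesis unfolding c_def cstar_def j_def[symmetric] by (rule someI)
  qed
  then have jk: "j < k" and cP: "c \<in> PsAt Lf Ps j" and big: "card K < 2 * card (Below Lf Ei Ps k j c \<inter> K)"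
    unfolding good_def by auto
  have c: "c \<in> parts_at V E s j" using cP PsAt_eq[OF jk] by simp
  have jk1: "Suc j < k"
  proof (rule ccontr)
    assume "\<not> Suc j < k"
    then have jj: "j = k - 1" using jk by simp
    have "Below Lf Ei Ps k j c \<subseteq> {c}"
      using Below_sem[OF k1 _ c] bottom_Below[OF c] jj by simp
    then have "Below Lf Ei Ps k j c \<inter> K \<subseteq> {c}" by blast
    then have "card (Below Lf Ei Ps k j c \<inter> K) \<le> card {c}" by (rule card_mono[rotated]) simp
    then show False using big K(3) by simp
  qed
  have qset_eq: "qset Lf Ei Ps k K = \<Union> (Children Lf Ei Ps j c)" by (simp add: qset_def j_def c_def)
  have qsub: "qset Lf Ei Ps k K \<subseteq> {x \<in> layer V E s (Suc j). inP j c x}"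
    unfolding qset_eq by (rule qset_sub[OF c jk1])
  have finq: "finite {x \<in> layer V E s (Suc j). inP j c x}" using finite_layer by simp
  show "finite (qset Lf Ei Ps k K)" using finite_subset[OF qsub finq] .
  have "card (qset Lf Ei Ps k K) \<le> card {x \<in> layer V E s (Suc j). inP j c x}"
    by (rule card_mono[OF finq qsub])
  also have "\<dots> \<le> 2 * D ^ (l + (Suc j - j))" by (rule region_bound[OF c]) simp
  finally show "card (qset Lf Ei Ps k K) \<le> 2 * D ^ (l + 1)" by simp
  assume ans: "\<forall>x\<in>qset Lf Ei Ps k K. ans (u,x) = dist E u x"
  have posc_eq: "posc Lf Ei Ps k ii u K ans = {c' \<in> Children Lf Ei Ps j c. \<exists>x\<in>c'. ans (u,x) = ii - Suc j}"
    by (simp add: posc_def j_def c_def)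
  have newK_eq: "newK Lf Ei Ps k ii u K ans = (if posc Lf Ei Ps k ii u K ans \<noteq> {}
     then K \<inter> Below Lf Ei Ps k (Suc j) (SOME c'. c' \<in> posc Lf Ei Ps k ii u K ans)
     else K - Below Lf Ei Ps k j c)" by (simp add: newK_def j_def c_def)
  have ChP: "\<And>c'. c' \<in> Children Lf Ei Ps j c \<Longrightarrow> c' \<in> parts_at V E s (Suc j)"
    using Children_sem[OF jk1 c] by blast
  have PC: "\<And>c'. c' \<in> Children Lf Ei Ps j c \<Longrightarrow> (\<exists>x\<in>c'. ans (u,x) = ii - Suc j) \<longleftrightarrow> inP (Suc j) c' u"
  proof -
    fix c' assume c': "c' \<in> Children Lf Ei Ps j c"
    have "\<And>x. x \<in> c' \<Longrightarrow> ans (u,x) = dist E u x" using ans c' unfolding qset_eq by blast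
    then have "(\<exists>x\<in>c'. ans (u,x) = ii - Suc j) \<longleftrightarrow> (\<exists>x\<in>c'. dist E u x = ii - Suc j)" by simp
    also have "\<dots> \<longleftrightarrow> inP (Suc j) c' u" by (rule test_sem[OF ChP[OF c'] _ u]) (use jk1 in simp)
    finally show "(\<exists>x\<in>c'. ans (u,x) = ii - Suc j) \<longleftrightarrow> inP (Suc j) c' u" .
  qed
  have Bj: "Below Lf Ei Ps k j c = {Q \<in> parts_at V E s (k - 1). \<exists>q\<in>Q. inP j c q}"
    using Below_sem[OF k1 _ c] jk by simp
  show "Q \<in> newK Lf Ei Ps k ii u K ans \<and> 2 * card (newK Lf Ei Ps k ii u K ans) \<le> card K
       \<and> newK Lf Ei Ps k ii u K ans \<subseteq> parts_at V E s (k - 1)"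
  proof (cases "posc Lf Ei Ps k ii u K ans \<noteq> {}")
    case True
    define c2 where "c2 = (SOME c'. c' \<in> posc Lf Ei Ps k ii u K ans)"
    have c2p: "c2 \<in> posc Lf Ei Ps k ii u K ans" unfolding c2_def using True by (simp add: some_in_eq)
    then have c2C: "c2 \<in> Children Lf Ei Ps j c" and c2a: "\<exists>x\<in>c2. ans (u,x) = ii - Suc j"
      unfolding posc_eq by simp_all
    have c2P: "c2 \<in> parts_at V E s (Suc j)" by (rule ChP[OF c2C])
    have c2u: "inP (Suc j) c2 u" using PC[OF c2C] c2a by simp
    have B2: "Below Lf Ei Ps k (Suc j) c2 = {Q \<in> parts_at V E s (k - 1). \<exists>q\<in>Q. inP (Suc j) c2 q}"
      using Below_sem[OF k1 _ c2P] jk1 by simp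
    have "Q \<in> Below Lf Ei Ps k (Suc j) c2"
      unfolding B2 using Q(1) target_Below[OF _ c2P Q] jk1 c2u by simp
    moreover have nk: "newK Lf Ei Ps k ii u K ans = K \<inter> Below Lf Ei Ps k (Suc j) c2"
      unfolding newK_eq c2_def using True by simp
    moreover have "\<not> good Lf Ei Ps k K (Suc j) c2"
    proof
      assume "good Lf Ei Ps k K (Suc j) c2"
      then have "Suc j \<in> J" unfolding J_def by blast
      then show False using maxJ by fastforce
    qed
    then have "\<not> card K < 2 * card (Below Lf Ei Ps k (Suc j) c2 \<inter> K)"
      unfolding good_def using jk1 c2P PsAt_eq[OF jk1] by simp
    then have "2 * card (K \<inter> Below Lf Ei Ps k (Suc j) c2) \<le> card K" by (simp add: Int_commute)
    ultimately show ?thesis using K by auto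
  next
    case False
    then have nk: "newK Lf Ei Ps k ii u K ans = K - Below Lf Ei Ps k j c" unfolding newK_eq by simp
    have "Q \<notin> Below Lf Ei Ps k j c"
    proof
      assume "Q \<in> Below Lf Ei Ps k j c"
      then have "\<exists>q\<in>Q. inP j c q" unfolding Bj by simp
      then have cu: "inP j c u" using target_Below[OF _ c Q] jk by simp
      obtain c' where c': "c' \<in> parts_at V E s (Suc j)" "inP (Suc j) c' u \<and> (\<exists>x\<in>c'. inP j c x)"
        using cover[OF c cu uV(1)] uV(2) jk by auto
      have "c' \<in> Children Lf Ei Ps j c" using Children_sem[OF jk1 c] c' by simp
      then have "c' \<in> posc Lf Ei Ps k ii u K ans" unfolding posc_eq using PC c' by blast
      then show False using False by simp
    qed
    moreover have "card (K - Below Lf Ei Ps k j c) = card K - card (K \<inter> Below Lf Ei Ps k j c)"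
      by (rule card_Diff_subset_Int) (use finK in simp)
    moreover have "card (K \<inter> Below Lf Ei Ps k j c) \<le> card K" by (rule card_mono[OF finK]) simp
    ultimately show ?thesis using nk K big by (auto simp: Int_commute)
  qed
qed

end


context grf begin

lemma finite_Bot_sub: "K \<subseteq> parts_at V E s j \<Longrightarrow> finite K"
  using finite_parts_at finite_subset by blast

lemma search_ok:
  assumes k1: "1 \<le> k" and u: "u \<in> layer V E s ii"
    and Q: "Q \<in> parts_at V E s (k - 1)" "inP (k - 1) Q u"
  shows "K \<subseteq> parts_at V E s (k - 1) \<Longrightarrow> Q \<in> K \<Longrightarrow> card K \<le> f \<Longrightarrow>
     run_result (\<lambda>(a, b). dist E a b) (search Lf Ei Ps k ii f u K) = {Q} \<and>
     real (run_queries (\<lambda>(a, b). dist E a b) (search Lf Ei Ps k ii f u K))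
        \<le> 2 * real D ^ (l + 1) * log 2 (real (card K))"
proof (induction f arbitrary: K)
  case 0
  then have "finite K" using finite_Bot_sub by blast
  then have "card K > 0" using 0 card_gt_0_iff by blast
  then show ?case using 0 by simp
next
  case (Suc f)
  let ?orc = "\<lambda>(a, b). dist E a b"
  have finK: "finite K" using Suc.prems finite_Bot_sub by blast
  have "card K > 0" using finK Suc.prems(2) card_gt_0_iff by blast
  then have cK1: "card K \<ge> 1" by simp
  show ?case
  proof (cases "card K \<le> 1")
    case True
    then have "card K = 1" using cK1 by simp
    then obtain z where "K = {z}" by (rule card_1_singletonE)
    then have KQ: "K = {Q}" using Suc.prems(2) by simp
    then show ?thesis using True by simp
  next
    case False
    then have c2: "2 \<le> card K" by simp
    let ?qs = "map (\<lambda>x. (u,x)) (lst (qset Lf Ei Ps k K))"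
    let ?ans = "run_result ?orc (askall ?qs)"
    have finq: "finite (qset Lf Ei Ps k K)" by (rule step(1)[OF k1 u Q Suc.prems(1,2) c2])
    have ansq: "\<forall>x\<in>qset Lf Ei Ps k K. ?ans (u,x) = dist E u x"
    proof
      fix x assume "x \<in> qset Lf Ei Ps k K"
      then have "(u,x) \<in> set ?qs" using lst(1)[OF finq] by auto
      then have "?ans (u,x) = ?orc (u,x)" by (rule askall_result)
      then show "?ans (u,x) = dist E u x" by simp
    qed
    define K' where "K' = newK Lf Ei Ps k ii u K ?ans"
    have st: "Q \<in> K' \<and> 2 * card K' \<le> card K \<and> K' \<subseteq> parts_at V E s (k - 1)"
      unfolding K'_def by (rule step(3)[OF k1 u Q Suc.prems(1,2) c2 ansq])
    have finK': "finite K'" using st finite_Bot_sub by blast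
    have "card K' > 0" using finK' st card_gt_0_iff by blast
    then have cK'1: "card K' \<ge> 1" by simp
    have "card K' \<le> f" using st Suc.prems(3) cK'1 by linarith
    then have IH: "run_result ?orc (search Lf Ei Ps k ii f u K') = {Q} \<and>
        real (run_queries ?orc (search Lf Ei Ps k ii f u K')) \<le> 2 * real D ^ (l + 1) * log 2 (real (card K'))"
      using Suc.IH st by blast
    have sdef: "search Lf Ei Ps k ii (Suc f) u K = qbind (askall ?qs) (\<lambda>ans. search Lf Ei Ps k ii f u (newK Lf Ei Ps k ii u K ans))"
      using False by simp
    have rr: "run_result ?orc (search Lf Ei Ps k ii (Suc f) u K) = run_result ?orc (search Lf Ei Ps k ii f u K')"
      unfolding sdef K'_def by simp
    have rq: "run_queries ?orc (search Lf Ei Ps k ii (Suc f) u K) = card (qset Lf Ei Ps k K) + run_queries ?orc (search Lf Ei Ps k ii f u K')"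
      unfolding sdef K'_def using lst(3)[OF finq] by simp
    have "real (card (qset Lf Ei Ps k K)) \<le> real (2 * D ^ (l + 1))"
      unfolding of_nat_le_iff by (rule step(2)[OF k1 u Q Suc.prems(1,2) c2])
    then have cq: "real (card (qset Lf Ei Ps k K)) \<le> 2 * real D ^ (l + 1)" by simp
    have "real (card K') \<le> real (card K) / 2" using st by simp
    then have "log 2 (real (card K')) \<le> log 2 (real (card K) / 2)"
      using cK'1 by (subst log_le_cancel_iff) auto
    also have "\<dots> = log 2 (real (card K)) - 1" using c2 by (simp add: log_divide)
    finally have lg: "log 2 (real (card K')) \<le> log 2 (real (card K)) - 1" .
    have Dp: "0 \<le> 2 * real D ^ (l + 1)" by simp
    have "real (run_queries ?orc (search Lf Ei Ps k ii (Suc f) u K))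
        \<le> 2 * real D ^ (l + 1) + 2 * real D ^ (l + 1) * log 2 (real (card K'))"
      using rq cq IH by simp
    also have "\<dots> \<le> 2 * real D ^ (l + 1) + 2 * real D ^ (l + 1) * (log 2 (real (card K)) - 1)"
      using mult_left_mono[OF lg Dp] by simp
    also have "\<dots> = 2 * real D ^ (l + 1) * log 2 (real (card K))" by (simp add: algebra_simps)
    finally show ?thesis using rr IH by simp
  qed
qed

end


lemma sum_list_le_real:
  "(\<forall>x\<in>set xs. real (f x) \<le> B) \<Longrightarrow> real (sum_list (map f xs)) \<le> real (length xs) * B"
  by (induction xs) (auto simp: algebra_simps)

lemma ln2_ge: "1/2 \<le> ln (2::real)"
proof -
  have "ln (inverse (2::real)) \<le> inverse 2 - 1" by (rule ln_le_minus_one) simp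
  then have "- ln (2::real) \<le> inverse 2 - 1" by (simp only: ln_inverse)
  then show ?thesis by simp
qed

context grf begin

definition Qu :: "nat \<Rightarrow> nat set" where
  "Qu u = (THE Q. Q \<in> parts_at V E s (k - 1) \<and> inP (k - 1) Q u)"

lemma Qu: assumes "u \<in> V" "k - 1 \<le> lay u"
  shows "Qu u \<in> parts_at V E s (k - 1)" "inP (k - 1) (Qu u) u"
    "\<And>Q. Q \<in> parts_at V E s (k - 1) \<Longrightarrow> inP (k - 1) Q u \<Longrightarrow> Q = Qu u"
proof -
  have ex: "\<exists>!Q. Q \<in> parts_at V E s (k - 1) \<and> inP (k - 1) Q u"
    using target_exists[OF assms] target_unique by blast
  have "Qu u \<in> parts_at V E s (k - 1) \<and> inP (k - 1) (Qu u) u"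
    unfolding Qu_def by (rule theI'[OF ex])
  then show "Qu u \<in> parts_at V E s (k - 1)" "inP (k - 1) (Qu u) u" by simp_all
  fix Q assume "Q \<in> parts_at V E s (k - 1)" "inP (k - 1) Q u"
  then show "Q = Qu u" using ex \<open>Qu u \<in> parts_at V E s (k - 1) \<and> inP (k - 1) (Qu u) u\<close> by blast
qed

abbreviation "orc \<equiv> (\<lambda>(a, b). dist E a b)"
abbreviation "gg \<equiv> (\<lambda>u. search Lf Ei Ps k ii (card (PsAt Lf Ps (k - 1))) u (PsAt Lf Ps (k - 1)))"

lemma Aproc_eq:
  "Aproc (l, k, layer V E s, graph_prefix V E s ii, tree_prefix V E s k) =
   qbind (collect gg (lst (Lf ii)))
     (\<lambda>m. qbind (askall (lst (prs Lf Ei k ii m))) (\<lambda>ans. Ret (outG Lf Ei k ii m ans)))"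
  by (simp add: Aproc_def graph_prefix_def tree_prefix_def Let_def)

end


context grf begin

lemma Ps0: "k = 0 \<Longrightarrow> PsAt Lf Ps (k - 1) = {}"
  by (simp add: PsAt_def)

lemma gg_ok:
  assumes k1: "1 \<le> k" and u: "u \<in> layer V E s ii"
  shows "run_result orc (gg u) = {Qu u}"
    "real (run_queries orc (gg u)) \<le> 2 * real D ^ (l + 1) * log 2 (real (card (parts_at V E s (k - 1))))"
proof -
  have uV: "u \<in> V" "lay u = ii" using u by (auto simp: layer_def)
  have PA: "PsAt Lf Ps (k - 1) = parts_at V E s (k - 1)" using PsAt_eq k1 by simp
  have lu: "k - 1 \<le> lay u" using uV(2) by simp
  have Q: "Qu u \<in> parts_at V E s (k - 1)" "inP (k - 1) (Qu u) u" using Qu(1,2)[OF uV(1) lu] by auto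
  have "run_result orc (search Lf Ei Ps k ii (card (parts_at V E s (k - 1))) u (parts_at V E s (k - 1))) = {Qu u} \<and>
     real (run_queries orc (search Lf Ei Ps k ii (card (parts_at V E s (k - 1))) u (parts_at V E s (k - 1))))
        \<le> 2 * real D ^ (l + 1) * log 2 (real (card (parts_at V E s (k - 1))))"
    by (rule search_ok[OF k1 u Q subset_refl Q(1) le_refl])
  then show "run_result orc (gg u) = {Qu u}"
    "real (run_queries orc (gg u)) \<le> 2 * real D ^ (l + 1) * log 2 (real (card (parts_at V E s (k - 1))))"
    unfolding PA by simp_all
qed

lemma gg_cost:
  assumes u: "u \<in> layer V E s ii" and n2: "2 \<le> card V"
  shows "real (run_queries orc (gg u)) \<le> 2 * real D ^ (l + 1) * log 2 (real (card V))"
proof (cases "k = 0")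
  case True
  have "run_queries orc (gg u) = 0" using Ps0[OF True] by simp
  moreover have "0 \<le> log 2 (real (card V))" using n2 by simp
  ultimately show ?thesis by simp
next
  case False
  then have k1: "1 \<le> k" by simp
  have uV: "u \<in> V" "lay u = ii" using u by (auto simp: layer_def)
  have lu: "k - 1 \<le> lay u" using uV(2) by simp
  have "Qu u \<in> parts_at V E s (k - 1)" using Qu(1)[OF uV(1) lu] .
  then have "card (parts_at V E s (k - 1)) > 0" using finite_parts_at card_gt_0_iff by blast
  then have "log 2 (real (card (parts_at V E s (k - 1)))) \<le> log 2 (real (card V))"
    using card_parts_at[of "k - 1"] by (subst log_le_cancel_iff) auto
  then have "2 * real D ^ (l + 1) * log 2 (real (card (parts_at V E s (k - 1)))) \<le> 2 * real D ^ (l + 1) * log 2 (real (card V))"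
    by (rule mult_left_mono) simp
  then show ?thesis using gg_ok(2)[OF k1 u] by linarith
qed

lemma Cand_sub: "Cand Lf Ei k ii m u \<subseteq> Lf (ii - 1) \<union> Lf ii"
  unfolding Cand_def by auto

lemma Dpow_mono: "a \<le> b \<Longrightarrow> D ^ a \<le> D ^ b"
  using D2 by (simp add: power_increasing)

lemma Cand_card:
  assumes mq: "1 \<le> k \<Longrightarrow> \<forall>x\<in>Lf ii. m x = {Qu x}" and u: "u \<in> Lf ii"
  shows "card (Cand Lf Ei k ii m u) \<le> 4 * D ^ (4 * l + 8)"
proof (cases "k = 0")
  case True
  then have "Cand Lf Ei k ii m u = Lf (ii - 1) \<union> Lf ii" by (simp add: Cand_def)
  then have "card (Cand Lf Ei k ii m u) \<le> card (Lf (ii - 1)) + card (Lf ii)" by (simp add: card_Un_le)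
  also have "\<dots> \<le> 2 * D ^ (ii - 1) + 2 * D ^ ii" by (rule add_mono[OF layer_bound layer_bound])
  also have "\<dots> \<le> 2 * D ^ (4 * l + 8) + 2 * D ^ (4 * l + 8)"
    using Dpow_mono[of "ii - 1" "4 * l + 8"] Dpow_mono[of ii "4 * l + 8"] True by simp
  finally show ?thesis by simp
next
  case False
  then have k1: "1 \<le> k" by simp
  have uV: "u \<in> V" "lay u = ii" using u by (auto simp: layer_def)
  let ?Q = "Qu u"
  have lu: "k - 1 \<le> lay u" using uV(2) by simp
  have Q: "?Q \<in> parts_at V E s (k - 1)" "inP (k - 1) ?Q u" using Qu(1,2)[OF uV(1) lu] by auto
  have mu: "m u = {?Q}" using mq k1 u by blast
  let ?A1 = "{x \<in> Lf (ii - 1). inP (k - 1) ?Q x}"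
  let ?A2 = "{x \<in> Lf ii. inP (k - 1) ?Q x}"
  have sub: "Cand Lf Ei k ii m u \<subseteq> ?A1 \<union> ?A2"
  proof
    fix v assume v: "v \<in> Cand Lf Ei k ii m u"
    show "v \<in> ?A1 \<union> ?A2"
    proof (cases "v \<in> Lf ii")
      case True
      then have "m v = m u" using v False by (auto simp: Cand_def layer_def)
      moreover have "m v = {Qu v}" using mq k1 True by blast
      ultimately have "Qu v = ?Q" using mu by simp
      moreover have "inP (k - 1) (Qu v) v" using Qu(2)[of v] True by (auto simp: layer_def)
      ultimately show ?thesis using True by simp
    next
      case nT: False
      then have v1: "v \<in> Lf (ii - 1)" "\<exists>Q'\<in>m u. Desc Ei Q' v (ii - k)" using v False by (auto simp: Cand_def)
      then have D1: "Desc Ei ?Q v (ii - k)" using mu by simp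
      have vV: "v \<in> V" "lay v = ii - 1" using v1 by (auto simp: layer_def)
      have "ii - k = lay v - (k - 1)" using vV k1 by simp
      then have "Desc Ei ?Q v (lay v - (k - 1))" using D1 by simp
      then have "inP (k - 1) ?Q v" using Desc_sem[OF Q(1) vV(1)] vV(2) by simp
      then show ?thesis using v1 by simp
    qed
  qed
  have fin: "finite ?A1" "finite ?A2" using finite_layer by simp_all
  have "card (Cand Lf Ei k ii m u) \<le> card (?A1 \<union> ?A2)" by (rule card_mono) (use fin sub in auto)
  also have "\<dots> \<le> card ?A1 + card ?A2" by (rule card_Un_le)
  also have "\<dots> \<le> 2 * D ^ (l + (ii - 1 - (k - 1))) + 2 * D ^ (l + (ii - (k - 1)))"
    using region_bound[OF Q(1), of "ii - 1"] region_bound[OF Q(1), of ii] by (simp add: add_mono)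
  also have "\<dots> \<le> 2 * D ^ (4 * l + 8) + 2 * D ^ (4 * l + 8)"
    using Dpow_mono[of "l + (ii - 1 - (k - 1))" "4 * l + 8"] Dpow_mono[of "l + (ii - (k - 1))" "4 * l + 8"] k1
    by simp
  finally show ?thesis by simp
qed

lemma Cand_edge:
  assumes mq: "1 \<le> k \<Longrightarrow> \<forall>x\<in>Lf ii. m x = {Qu x}" and u: "u \<in> Lf ii"
    and e: "(u,v) \<in> adj E" and v: "v \<in> Lf (ii - 1) \<union> Lf ii"
  shows "v \<in> Cand Lf Ei k ii m u"
proof (cases "k = 0")
  case True then show ?thesis using v by (simp add: Cand_def)
next
  case False
  then have k1: "1 \<le> k" by simp
  have uV: "u \<in> V" "lay u = ii" using u by (auto simp: layer_def)
  have vV: "v \<in> V" "lay v = ii - 1 \<or> lay v = ii" using v by (auto simp: layer_def)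
  let ?Q = "Qu u"
  have lu: "k - 1 \<le> lay u" using uV(2) by simp
  have Q: "?Q \<in> parts_at V E s (k - 1)" "inP (k - 1) ?Q u" using Qu(1,2)[OF uV(1) lu] by auto
  have mu: "m u = {?Q}" using mq k1 u by blast
  obtain q where q: "q \<in> ?Q" "u \<in> cmp (k - 1) q" using Q(2) by (rule bexE)
  have lv: "k - 1 \<le> lay v" using vV(2) by auto
  have "v \<in> cmp (k - 1) u" by (rule cmp_adj[OF e]) (use uV lv in simp_all)
  then have "v \<in> cmp (k - 1) q" using q(2) cmp_trans by blast
  then have inv: "inP (k - 1) ?Q v" using q(1) by (rule bexI)
  show ?thesis
  proof (cases "lay v = ii")
    case True
    then have "v \<in> Lf ii" using vV by (simp add: layer_def)
    then have "m v = {Qu v}" using mq k1 by blast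
    moreover have "?Q = Qu v" using Qu(3)[OF vV(1) _ Q(1) inv] lv by simp
    ultimately have "m v = m u" using mu by simp
    then show ?thesis using \<open>v \<in> Lf ii\<close> False by (simp add: Cand_def)
  next
    case nT: False
    then have lv1: "lay v = ii - 1" using vV by simp
    have "Desc Ei ?Q v (lay v - (k - 1))" using Desc_sem[OF Q(1) vV(1)] lv lv1 inv by simp
    moreover have "lay v - (k - 1) = ii - k" using lv1 k1 by simp
    ultimately have "Desc Ei ?Q v (ii - k)" by simp
    then have "\<exists>Q'\<in>m u. Desc Ei Q' v (ii - k)" using mu by simp
    moreover have "v \<in> Lf (ii - 1)" using vV(1) lv1 by (simp add: layer_def)
    ultimately show ?thesis using False by (simp add: Cand_def)
  qed
qed

end


context grf begin

lemma main_ok: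
  assumes n2: "2 \<le> card V"
  shows "run_result orc (Aproc (l, k, layer V E s, graph_prefix V E s ii, tree_prefix V E s k)) = graph_prefix V E s (ii + 1)
     \<and> real (run_queries orc (Aproc (l, k, layer V E s, graph_prefix V E s ii, tree_prefix V E s k)))
        \<le> 4 * real (card (layer V E s ii)) * (real D ^ (l + 2) * ln (real (card V)) + real D ^ (4 * l + 8))"
proof -
  define m where "m = run_result orc (collect gg (lst (Lf ii)))"
  have finLi: "finite (Lf ii)" by (rule finite_layer)
  have mq: "1 \<le> k \<Longrightarrow> \<forall>x\<in>Lf ii. m x = {Qu x}"
  proof
    fix x assume k1: "1 \<le> k" and x: "x \<in> Lf ii"
    have "m x = run_result orc (gg x)" unfolding m_def by (rule collect_result) (use lst(1)[OF finLi] x in simp)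
    then show "m x = {Qu x}" using gg_ok(1)[OF k1 x] by simp
  qed
  define P where "P = prs Lf Ei k ii m"
  have Psub: "P \<subseteq> Lf ii \<times> (Lf (ii - 1) \<union> Lf ii)" unfolding P_def prs_def using Cand_sub by blast
  have finP: "finite P" by (rule finite_subset[OF Psub]) (simp add: finite_layer)
  define ans where "ans = run_result orc (askall (lst P))"
  have ansP: "\<And>p. p \<in> P \<Longrightarrow> ans p = orc p"
    unfolding ans_def by (rule askall_result) (simp add: lst(1)[OF finP])
  have rr: "run_result orc (Aproc (l, k, layer V E s, graph_prefix V E s ii, tree_prefix V E s k)) = outG Lf Ei k ii m ans"
    unfolding Aproc_eq by (simp add: m_def P_def ans_def)
  have rq: "run_queries orc (Aproc (l, k, layer V E s, graph_prefix V E s ii, tree_prefix V E s k))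
      = sum_list (map (\<lambda>x. run_queries orc (gg x)) (lst (Lf ii))) + card P"
  proof -
    have "run_queries orc (Aproc (l, k, layer V E s, graph_prefix V E s ii, tree_prefix V E s k))
      = run_queries orc (collect gg (lst (Lf ii))) + run_queries orc (askall (lst (prs Lf Ei k ii (run_result orc (collect gg (lst (Lf ii)))))))"
      unfolding Aproc_eq by (simp only: run_queries_qbind run_queries.simps add_0_right)
    also have "\<dots> = sum_list (map (\<lambda>x. run_queries orc (gg x)) (lst (Lf ii))) + card P"
      unfolding m_def[symmetric] P_def[symmetric] by (simp only: collect_queries askall_queries lst(3)[OF finP])
    finally show ?thesis .
  qed
  let ?F = "{{u,v} | u v. (u,v) \<in> P \<and> ans (u,v) = 1}"
  have key: "\<And>u v. lay u = ii \<Longrightarrow> (u,v) \<in> adj E \<Longrightarrow> lay v \<le> ii \<Longrightarrow> {u,v} \<in> ?F"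
  proof -
    fix u v assume lu: "lay u = ii" and e: "(u,v) \<in> adj E" and lv: "lay v \<le> ii"
    have uV: "u \<in> V" "v \<in> V" using adj_V[OF e] by auto
    have "lay u \<le> lay v + 1" using lay_adj[OF adj_sym[OF e]] .
    then have "v \<in> Lf (ii - 1) \<union> Lf ii" using lu lv uV(2) by (auto simp: layer_def)
    moreover have uL: "u \<in> Lf ii" using uV lu by (simp add: layer_def)
    ultimately have "v \<in> Cand Lf Ei k ii m u" using Cand_edge[OF mq uL e] by blast
    then have uvP: "(u,v) \<in> P" unfolding P_def prs_def using uL by simp
    then have "ans (u,v) = dist E u v" using ansP by simp
    also have "\<dots> = 1" using dist1_iff[OF uV] e by simp
    finally show "{u,v} \<in> ?F" using uvP by blast
  qed
  have edges: "Ei \<union> ?F = {e \<in> E. e \<subseteq> layers_lt V E s (ii + 1)}"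
  proof
    show "Ei \<union> ?F \<subseteq> {e \<in> E. e \<subseteq> layers_lt V E s (ii + 1)}"
    proof
      fix e assume "e \<in> Ei \<union> ?F"
      then show "e \<in> {e \<in> E. e \<subseteq> layers_lt V E s (ii + 1)}"
      proof
        assume "e \<in> Ei"
        then show ?thesis by (auto simp: layers_lt_def)
      next
        assume "e \<in> ?F"
        then obtain u v where uv: "e = {u,v}" "(u,v) \<in> P" "ans (u,v) = 1" by blast
        have u: "u \<in> Lf ii" and v: "v \<in> Lf (ii - 1) \<union> Lf ii" using uv(2) Psub by auto
        have uV: "u \<in> V" "v \<in> V" "lay u = ii" "lay v \<le> ii" using u v by (auto simp: layer_def)
        have "dist E u v = 1" using uv(3) ansP[OF uv(2)] by simp
        then have "(u,v) \<in> adj E" using dist1_iff[OF uV(1,2)] by simp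
        then have "{u,v} \<in> E" using adj_V by blast
        moreover have "{u,v} \<subseteq> layers_lt V E s (ii + 1)" using uV by (simp add: layers_lt_def)
        ultimately show ?thesis using uv(1) by simp
      qed
    qed
  next
    show "{e \<in> E. e \<subseteq> layers_lt V E s (ii + 1)} \<subseteq> Ei \<union> ?F"
    proof
      fix e assume e: "e \<in> {e \<in> E. e \<subseteq> layers_lt V E s (ii + 1)}"
      then have eE: "e \<in> E" and eL: "e \<subseteq> layers_lt V E s (ii + 1)" by simp_all
      obtain a b where ab: "e = {a,b}" "a \<in> V" "b \<in> V" "a \<noteq> b"
        using eE sg unfolding simple_graph_def by blast
      have adjab: "(a,b) \<in> adj E" using eE ab by (simp add: adj_def)
      have la: "lay a \<le> ii" "lay b \<le> ii" using eL ab by (auto simp: layers_lt_def)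
      show "e \<in> Ei \<union> ?F"
      proof (cases "lay a < ii \<and> lay b < ii")
        case True
        then have "e \<subseteq> layers_lt V E s ii" using ab by (auto simp: layers_lt_def)
        then show ?thesis using eE by simp
      next
        case False
        then have "lay a = ii \<or> lay b = ii" using la by auto
        then have "e \<in> ?F"
        proof
          assume "lay a = ii"
          then show "e \<in> ?F" using key[OF _ adjab la(2)] ab(1) by simp
        next
          assume "lay b = ii"
          then have "{b,a} \<in> ?F" using key[OF _ adj_sym[OF adjab] la(1)] by simp
          then show "e \<in> ?F" using ab(1) by (simp add: insert_commute)
        qed
        then show ?thesis by simp
      qed
    qed
  qed
  have verts: "{v. \<exists>j<Suc ii. v \<in> Lf j} = layers_lt V E s (ii + 1)"
    by (auto simp: layer_def layers_lt_def)
  have correct: "outG Lf Ei k ii m ans = graph_prefix V E s (ii + 1)"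
    unfolding outG_def graph_prefix_def Let_def P_def[symmetric] using edges verts by simp
  let ?cL = "card (Lf ii)"
  let ?n = "real (card V)"
  let ?Dr = "real D"
  have S: "real (sum_list (map (\<lambda>x. run_queries orc (gg x)) (lst (Lf ii))))
      \<le> real (length (lst (Lf ii))) * (2 * ?Dr ^ (l + 1) * log 2 ?n)"
  proof (rule sum_list_le_real, rule ballI)
    fix x assume "x \<in> set (lst (Lf ii))"
    then have "x \<in> Lf ii" using lst(1)[OF finLi] by simp
    then show "real (run_queries orc (gg x)) \<le> 2 * ?Dr ^ (l + 1) * log 2 ?n" by (rule gg_cost[OF _ n2])
  qed
  then have S': "real (sum_list (map (\<lambda>x. run_queries orc (gg x)) (lst (Lf ii))))
      \<le> real ?cL * (2 * ?Dr ^ (l + 1) * log 2 ?n)" by (simp only: lst(3)[OF finLi])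
  have finU: "finite (Lf (ii - 1) \<union> Lf ii)" using finite_layer by simp
  have finC: "\<forall>u\<in>Lf ii. finite (Cand Lf Ei k ii m u)"
    using finite_subset[OF Cand_sub finU] by blast
  have "card P = (\<Sum>u\<in>Lf ii. card (Cand Lf Ei k ii m u))"
    unfolding P_def prs_def by (rule card_SigmaI[OF finLi finC])
  also have "\<dots> \<le> (\<Sum>u\<in>Lf ii. 4 * D ^ (4 * l + 8))"
    by (rule sum_mono) (rule Cand_card[OF mq])
  also have "\<dots> = ?cL * (4 * D ^ (4 * l + 8))" by simp
  finally have "real (card P) \<le> real (?cL * (4 * D ^ (4 * l + 8)))" by (simp only: of_nat_le_iff)
  then have cP: "real (card P) \<le> real ?cL * (4 * ?Dr ^ (4 * l + 8))" by simp
  have lnn: "0 \<le> ln ?n" using n2 by simp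
  have l2: "log 2 ?n \<le> 2 * ln ?n"
  proof -
    have "log 2 ?n = ln ?n / ln 2" by (simp add: log_def)
    also have "\<dots> \<le> 2 * ln ?n"
    proof -
      have pos: "0 < ln (2::real)" by simp
      have "ln ?n * 1 \<le> ln ?n * (2 * ln 2)" by (rule mult_left_mono[OF _ lnn]) (use ln2_ge in simp)
      then have "ln ?n \<le> 2 * ln ?n * ln 2" by (simp add: algebra_simps)
      then show ?thesis using pos by (simp add: divide_le_eq)
    qed
    finally show ?thesis .
  qed
  have D1: "1 \<le> ?Dr" using D2 by simp
  have lg0: "0 \<le> log 2 ?n" using n2 by simp
  have Dl: "?Dr ^ (l + 1) \<le> ?Dr ^ (l + 2)" by (rule power_increasing[OF _ D1]) simp
  have "2 * ?Dr ^ (l + 1) * log 2 ?n \<le> 2 * ?Dr ^ (l + 2) * (2 * ln ?n)"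
    by (rule mult_mono[OF _ l2]) (use Dl lg0 in simp_all)
  then have inner: "2 * ?Dr ^ (l + 1) * log 2 ?n \<le> 4 * (?Dr ^ (l + 2) * ln ?n)" by simp
  have cLnn: "0 \<le> real ?cL" by simp
  have "real (run_queries orc (Aproc (l, k, layer V E s, graph_prefix V E s ii, tree_prefix V E s k)))
      \<le> real ?cL * (2 * ?Dr ^ (l + 1) * log 2 ?n) + real ?cL * (4 * ?Dr ^ (4 * l + 8))"
    using rq S' cP by simp
  also have "\<dots> \<le> real ?cL * (4 * (?Dr ^ (l + 2) * ln ?n)) + real ?cL * (4 * ?Dr ^ (4 * l + 8))"
    using mult_left_mono[OF inner cLnn] by simp
  also have "\<dots> = 4 * real ?cL * (?Dr ^ (l + 2) * ln ?n + ?Dr ^ (4 * l + 8))" by (simp add: algebra_simps)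
  finally show ?thesis using rr correct by simp
qed

end

theorem mainTheorem6:
  "\<exists>C :: real. \<exists>A :: procedure.
     \<forall>(V :: nat set) (E :: nat set set) (s :: nat) (l :: nat) (k :: nat).
       simple_graph V E \<and> connected_graph V E \<and> card V \<ge> 2 \<and> max_degree V E \<ge> 2 \<and>
       s \<in> V \<and> l \<ge> tree_length V E s \<longrightarrow>
       (let i = k + l + 2;
            D = real (max_degree V E);
            n = real (card V);
            oracle = (\<lambda>(u, v). dist E u v);
            T = A (l, k, layer V E s, graph_prefix V E s i, tree_prefix V E s k)
        in run_result oracle T = graph_prefix V E s (i + 1) \<and>
           real (run_queries oracle T)
             \<le> C * real (card (layer V E s i)) * (D ^ (l + 2) * ln n + D ^ (4 * l + 8)))"
proof (intro exI allI impI)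
  fix V E s l k
  assume a: "simple_graph V E \<and> connected_graph V E \<and> card V \<ge> 2 \<and> max_degree V E \<ge> 2 \<and>
       s \<in> V \<and> l \<ge> tree_length V E s"
  then interpret grf V E s l k by unfold_locales auto
  have "card V \<ge> 2" using a by simp
  then show "let i = k + l + 2;
            D = real (max_degree V E);
            n = real (card V);
            oracle = (\<lambda>(u, v). dist E u v);
            T = Aproc (l, k, layer V E s, graph_prefix V E s i, tree_prefix V E s k)
        in run_result oracle T = graph_prefix V E s (i + 1) \<and>
           real (run_queries oracle T)
             \<le> (4::real) * real (card (layer V E s i)) * (D ^ (l + 2) * ln n + D ^ (4 * l + 8))"
    unfolding Let_def by (rule main_ok)
qed


end
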